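(* Let $n,k$ be positive integers with $k<n/2$. For any deterministic algorithm, adaptive or non-adaptive, that uses interventions of size at most $k$ and fully orients $\vec{K}_n(\sigma)$ for every total ordering $\sigma$ of $[1:n]$ (in the learning model of the context), there exists $\sigma$ for which the set of interventions $\mathcal{I}$ it uses satisfies $\frac{n}{k}\log_{\frac{ne}{k}} n \le |\mathcal{I}|$. Moreover, there exists a family $\mathcal{I}$ of subsets of $[1:n]$, each of size at most $k$, with $|\mathcal{I}| \le (\lceil n/k \rceil - 1)\lceil \log_{\lceil n/k\rceil} n\rceil$, which fully orients $\vec{K}_n(\sigma)$ for every $\sigma$.
   Context: For a total ordering $\sigma$ of $V=[1:n]$, $\vec{K}_n(\sigma)$ is the DAG on the complete graph $K_n$ in which each edge is directed from the earlier to the later vertex in $\sigma$. Learning model: the learner maintains a partially directed graph, initially the undirected $K_n$. Performing an intervention on $I\subseteq V$: (R0) every edge with exactly one endpoint in $I$ becomes oriented as in the true DAG; then the Meek rules are applied repeatedly until nothing more can be oriented: (R1) orient $a-b$ as $a\to b$ if there is $c$ with $c\to a$ and $c,b$ non-adjacent; (R2) orient $a-b$ as $a\to b$ if there is $c$ with $a\to c$, $c\to b$; (R3) orient $a-b$ as $a\to b$ if there are $c,d$ with $a-c$, $a-d$, $c\to b$, $d\to b$, $c,d$ non-adjacent; (R4) orient $a-c$ as $a\to c$ if there are $b,d$ with $b\to c$, $a-d$, $a-b$, $d\to b$, $c,d$ non-adjacent. A non-adaptive algorithm fixes $\mathcal{I}$ in advance; an adaptive deterministic algorithm chooses $I_{m+1}$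 as a deterministic function of the partially directed graph after $I_1,\ldots,I_m$. "Fully orients" means that after all interventions in $\mathcal{I}$ all edges are oriented. *)

theory Defs
  imports Complex_Main
begin

text \<open>The skeleton is always the complete graph K_n on V.
A partially directed graph on this skeleton is represented by the set D of its
directed edges (a pair (a,b) in D means a -> b); every other pair of distinct
vertices of V is an undirected edge.\<close>

type_synonym pdag = "(nat \<times> nat) set"

definition adj :: "nat \<Rightarrow> nat \<Rightarrow> nat \<Rightarrow> bool" where
  "adj n a b \<longleftrightarrow> a \<in> {1..n} \<and> b \<in> {1..n} \<and> a \<noteq> b"

definition nonadj :: "nat \<Rightarrow> nat \<Rightarrow> nat \<Rightarrow> bool" where
  "nonadj n a b \<longleftrightarrow> a \<in> {1..n} \<and> b \<in> {1..n} \<and> a \<noteq> b \<and> \<not> adj n a b"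

definition undir :: "nat \<Rightarrow> pdag \<Rightarrow> nat \<Rightarrow> nat \<Rightarrow> bool" where
  "undir n D a b \<longleftrightarrow> adj n a b \<and> (a, b) \<notin> D \<and> (b, a) \<notin> D"

text \<open>Meek rules: meek_rule n D a b means that some rule R1--R4 orients the
undirected edge a - b as a -> b.\<close>

definition meek_rule :: "nat \<Rightarrow> pdag \<Rightarrow> nat \<Rightarrow> nat \<Rightarrow> bool" where
  "meek_rule n D a b \<longleftrightarrow> undir n D a b \<and>
     ((\<exists>c. (c, a) \<in> D \<and> nonadj n c b)
    \<or> (\<exists>c. (a, c) \<in> D \<and> (c, b) \<in> D)
    \<or> (\<exists>c d. undir n D a c \<and> undir n D a d \<and> (c, b) \<in> D \<and> (d, b) \<in> D \<and> nonadj n c d)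
    \<or> (\<exists>c d. (c, b) \<in> D \<and> undir n D a d \<and> undir n D a c \<and> (d, c) \<in> D \<and> nonadj n b d))"

definition meek_step :: "nat \<Rightarrow> pdag \<Rightarrow> pdag \<Rightarrow> bool" where
  "meek_step n D D' \<longleftrightarrow> (\<exists>a b. meek_rule n D a b \<and> D' = insert (a, b) D)"

definition meek_closure :: "nat \<Rightarrow> pdag \<Rightarrow> pdag" where
  "meek_closure n D = (THE D'. (meek_step n)\<^sup>*\<^sup>* D D' \<and> \<not> (\<exists>D''. meek_step n D' D''))"

text \<open>A total ordering of [1:n] is given by its position function sigma, a
bijection of [1:n]; the true DAG orients u -> v iff sigma u < sigma v.\<close>

definition total_ordering :: "nat \<Rightarrow> (nat \<Rightarrow> nat) \<Rightarrow> bool" where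
  "total_ordering n \<sigma> \<longleftrightarrow> bij_betw \<sigma> {1..n} {1..n}"

definition cut_edges :: "nat \<Rightarrow> (nat \<Rightarrow> nat) \<Rightarrow> nat set \<Rightarrow> pdag" where
  "cut_edges n \<sigma> I = {(u, v). adj n u v \<and> \<sigma> u < \<sigma> v \<and> (u \<in> I \<longleftrightarrow> v \<notin> I)}"

definition intervene :: "nat \<Rightarrow> (nat \<Rightarrow> nat) \<Rightarrow> pdag \<Rightarrow> nat set \<Rightarrow> pdag" where
  "intervene n \<sigma> D I =
     meek_closure n ((D - {(v, u). (u, v) \<in> cut_edges n \<sigma> I}) \<union> cut_edges n \<sigma> I)"

definition apply_list :: "nat \<Rightarrow> (nat \<Rightarrow> nat) \<Rightarrow> pdag \<Rightarrow> nat set list \<Rightarrow> pdag" where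
  "apply_list n \<sigma> D Is = fold (\<lambda>I D. intervene n \<sigma> D I) Is D"

definition fully_oriented :: "nat \<Rightarrow> pdag \<Rightarrow> bool" where
  "fully_oriented n D \<longleftrightarrow> (\<forall>a b. adj n a b \<longrightarrow> (a, b) \<in> D \<or> (b, a) \<in> D)"

text \<open>Non-adaptive: a fixed finite family of interventions, all performed starting
from the undirected K_n.  The final result does not depend on the order in which
the interventions are performed; to avoid relying on that, we give two versions:
some enumeration of the family fully orients (used as hypothesis of the lower
bound), and every enumeration fully orients (used in the conclusion of the
upper bound).\<close>

definition family_orients_some_order :: "nat \<Rightarrow> nat set set \<Rightarrow> bool" where
  "family_orients_some_order n \<I> \<longleftrightarrow>
     (\<forall>\<sigma>. total_ordering n \<sigma> \<longrightarrow>
        (\<exists>Is. distinct Is \<and> set Is = \<I> \<and> fully_oriented n (apply_list n \<sigma> {} Is)))"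

definition family_orients_every_order :: "nat \<Rightarrow> nat set set \<Rightarrow> bool" where
  "family_orients_every_order n \<I> \<longleftrightarrow> finite \<I> \<and>
     (\<forall>\<sigma>. total_ordering n \<sigma> \<longrightarrow>
        (\<forall>Is. distinct Is \<and> set Is = \<I> \<longrightarrow> fully_oriented n (apply_list n \<sigma> {} Is)))"

text \<open>Adaptive deterministic algorithm: a function from the current partially
directed graph to the next intervention (Some I) or to stopping (None).
adaptive_run alg n sigma m = (graph, interventions used) after m rounds.\<close>

type_synonym algorithm = "pdag \<Rightarrow> nat set option"

fun adaptive_run :: "algorithm \<Rightarrow> nat \<Rightarrow> (nat \<Rightarrow> nat) \<Rightarrow> nat \<Rightarrow> pdag \<times> nat set list" where
  "adaptive_run alg n \<sigma> 0 = ({}, [])"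
| "adaptive_run alg n \<sigma> (Suc m) =
     (case adaptive_run alg n \<sigma> m of (D, Is) \<Rightarrow>
        (case alg D of None \<Rightarrow> (D, Is) | Some I \<Rightarrow> (intervene n \<sigma> D I, Is @ [I])))"

definition stops_at :: "algorithm \<Rightarrow> nat \<Rightarrow> (nat \<Rightarrow> nat) \<Rightarrow> nat \<Rightarrow> bool" where
  "stops_at alg n \<sigma> m \<longleftrightarrow> alg (fst (adaptive_run alg n \<sigma> m)) = None"

definition alg_fully_orients :: "algorithm \<Rightarrow> nat \<Rightarrow> nat \<Rightarrow> bool" where
  "alg_fully_orients alg n k \<longleftrightarrow>
     (\<forall>\<sigma>. total_ordering n \<sigma> \<longrightarrow>
        (\<exists>m. stops_at alg n \<sigma> m \<and> fully_oriented n (fst (adaptive_run alg n \<sigma> m))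
           \<and> (\<forall>I \<in> set (snd (adaptive_run alg n \<sigma> m)). I \<subseteq> {1..n} \<and> card I \<le> k)))"

end

theory Submission
  imports Defs
begin


definition fwd :: "nat \<Rightarrow> (nat \<Rightarrow> nat) \<Rightarrow> pdag" where
  "fwd n \<sigma> = {(a,b). adj n a b \<and> \<sigma> a < \<sigma> b}"

lemma nonadj_False[simp]: "nonadj n a b = False"
  by (auto simp: nonadj_def adj_def)

lemma fwd_trans: "trans (fwd n \<sigma>)"
  unfolding trans_def fwd_def adj_def by auto

lemma fwd_finite: "finite (fwd n \<sigma>)"
proof -
  have "fwd n \<sigma> \<subseteq> {1..n} \<times> {1..n}" by (auto simp: fwd_def adj_def)
  then show ?thesis by (rule finite_subset) auto
qed

lemma trancl_fwd: "D \<subseteq> fwd n \<sigma> \<Longrightarrow> D\<^sup>+ \<subseteq> fwd n \<sigma>"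
  by (metis fwd_trans trancl_id trancl_mono subsetI)

lemma meek_rule_fwd:
  assumes "D \<subseteq> fwd n \<sigma>"
  shows "meek_rule n D a b \<longleftrightarrow> undir n D a b \<and> (\<exists>c. (a,c) \<in> D \<and> (c,b) \<in> D)"
  unfolding meek_rule_def by auto

lemma reach_props:
  assumes "(meek_step n)\<^sup>*\<^sup>* D D'" "D \<subseteq> fwd n \<sigma>"
  shows "D \<subseteq> D' \<and> D' \<subseteq> D\<^sup>+"
  using assms(1)
proof (induction rule: rtranclp_induct)
  case base then show ?case by auto
next
  case (step y z)
  then obtain a b where ab: "meek_rule n y a b" "z = insert (a,b) y" by (auto simp: meek_step_def)
  have yf: "y \<subseteq> fwd n \<sigma>" using step.IH trancl_fwd[OF assms(2)] by blast
  from ab(1) meek_rule_fwd[OF yf] obtain c where "(a,c) \<in> y" "(c,b) \<in> y" by blast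
  then have "(a,b) \<in> D\<^sup>+" using step.IH by (meson subsetD trancl_trans)
  then show ?case using step.IH ab(2) by auto
qed

lemma terminal_trans:
  assumes "D' \<subseteq> fwd n \<sigma>" "\<not> (\<exists>D''. meek_step n D' D'')"
  shows "trans D'"
proof (rule transI)
  fix a c b assume ac: "(a,c) \<in> D'" and cb: "(c,b) \<in> D'"
  show "(a,b) \<in> D'"
  proof (rule ccontr)
    assume nab: "(a,b) \<notin> D'"
    have f1: "adj n a c" "\<sigma> a < \<sigma> c" "adj n c b" "\<sigma> c < \<sigma> b" using ac cb assms(1) by (auto simp: fwd_def)
    then have "adj n a b" by (auto simp: adj_def)
    moreover have "(b,a) \<notin> D'" using assms(1) f1 by (auto simp: fwd_def)
    ultimately have "meek_rule n D' a b" using ac cb nab meek_rule_fwd[OF assms(1)]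
      by (auto simp: undir_def)
    then have "meek_step n D' (insert (a,b) D')" by (auto simp: meek_step_def)
    then show False using assms(2) by blast
  qed
qed

lemma terminal_exists:
  assumes "D \<subseteq> fwd n \<sigma>"
  shows "\<exists>D'. (meek_step n)\<^sup>*\<^sup>* D D' \<and> \<not> (\<exists>D''. meek_step n D' D'')"
  using assms
proof (induction "card (fwd n \<sigma> - D)" arbitrary: D rule: less_induct)
  case less
  show ?case
  proof (cases "\<exists>D''. meek_step n D D''")
    case False then show ?thesis by blast
  next
    case True
    then obtain a b where ab: "meek_rule n D a b" and D'': "meek_step n D (insert (a,b) D)"
      by (auto simp: meek_step_def)
    from ab meek_rule_fwd[OF less.prems] obtain c where c: "(a,c) \<in> D" "(c,b) \<in> D" and u: "undir n D a b" by blast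
    have "\<sigma> a < \<sigma> c" "\<sigma> c < \<sigma> b" using c less.prems by (auto simp: fwd_def)
    then have "\<sigma> a < \<sigma> b" by simp
    then have abf: "(a,b) \<in> fwd n \<sigma>" using u by (auto simp: fwd_def undir_def)
    have abn: "(a,b) \<notin> D" using u by (auto simp: undir_def)
    have sub: "insert (a,b) D \<subseteq> fwd n \<sigma>" using abf less.prems by auto
    have "card (fwd n \<sigma> - insert (a,b) D) < card (fwd n \<sigma> - D)"
      by (rule psubset_card_mono) (use fwd_finite abf abn in auto)
    from less.hyps[OF this sub] obtain D' where "(meek_step n)\<^sup>*\<^sup>* (insert (a,b) D) D'" "\<not> (\<exists>D''. meek_step n D' D'')" by blast
    then show ?thesis using D'' by (meson converse_rtranclp_into_rtranclp)
  qed
qed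

lemma meek_closure_eq:
  assumes "D \<subseteq> fwd n \<sigma>"
  shows "meek_closure n D = D\<^sup>+"
proof -
  have key: "D' = D\<^sup>+" if "(meek_step n)\<^sup>*\<^sup>* D D'" "\<not> (\<exists>D''. meek_step n D' D'')" for D'
  proof -
    have r: "D \<subseteq> D' \<and> D' \<subseteq> D\<^sup>+" using reach_props[OF that(1) assms] .
    have "D' \<subseteq> fwd n \<sigma>" using r trancl_fwd[OF assms] by blast
    then have "trans D'" using terminal_trans that(2) by blast
    then have "D\<^sup>+ \<subseteq> D'" using r by (metis trancl_id trancl_mono subsetI)
    then show ?thesis using r by blast
  qed
  obtain D' where D': "(meek_step n)\<^sup>*\<^sup>* D D'" "\<not> (\<exists>D''. meek_step n D' D'')"
    using terminal_exists[OF assms] by blast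
  show ?thesis unfolding meek_closure_def
    apply (rule the_equality)
    using D' key apply auto[1]
    using key by blast
qed

lemma cut_fwd: "total_ordering n \<sigma> \<Longrightarrow> cut_edges n \<sigma> I \<subseteq> fwd n \<sigma>"
  by (auto simp: cut_edges_def fwd_def)

lemma cut_fwd': "cut_edges n \<sigma> I \<subseteq> fwd n \<sigma>"
  by (auto simp: cut_edges_def fwd_def)

lemma intervene_eq:
  assumes "D \<subseteq> fwd n \<sigma>"
  shows "intervene n \<sigma> D I = (D \<union> cut_edges n \<sigma> I)\<^sup>+"
proof -
  have "(D - {(v, u). (u, v) \<in> cut_edges n \<sigma> I}) \<union> cut_edges n \<sigma> I = D \<union> cut_edges n \<sigma> I"
    using assms by (auto simp: cut_edges_def fwd_def)
  moreover have "D \<union> cut_edges n \<sigma> I \<subseteq> fwd n \<sigma>" using assms cut_fwd' by blast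
  ultimately show ?thesis unfolding intervene_def using meek_closure_eq by metis
qed

lemma intervene_fwd: "D \<subseteq> fwd n \<sigma> \<Longrightarrow> intervene n \<sigma> D I \<subseteq> fwd n \<sigma>"
  using intervene_eq trancl_fwd cut_fwd' by (metis Un_least)



definition L :: "real \<Rightarrow> real \<Rightarrow> real" where "L a b = a * ln (b / a)"
definition G :: "real \<Rightarrow> real \<Rightarrow> real" where "G x y = L x (x+y) + L y (x+y)"
definition phi :: "real \<Rightarrow> real" where "phi z = z * ln z"

lemma L0[simp]: "L 0 b = 0" by (simp add: L_def)

lemma phi_split:
  assumes "0 \<le> x" "0 \<le> y"
  shows "phi (x+y) = phi x + phi y + G x y"
proof (cases "x = 0 \<or> y = 0")
  case True then show ?thesis using assms by (auto simp: phi_def G_def L_def)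
next
  case False
  then have "x > 0" "y > 0" using assms by auto
  then show ?thesis by (simp add: phi_def G_def L_def ln_div algebra_simps)
qed

lemma logsum:
  assumes "0 \<le> a1" "a1 \<le> b1" "0 \<le> a2" "a2 \<le> b2"
  shows "L a1 b1 + L a2 b2 \<le> L (a1+a2) (b1+b2)"
proof -
  have mono: "L a b \<le> L a b'" if "0 \<le> a" "a \<le> b" "b \<le> b'" for a b b'
  proof (cases "a = 0")
    case False
    then have "a > 0" using that by auto
    then show ?thesis unfolding L_def using that
      by (intro mult_left_mono ln_mono) (auto simp: divide_right_mono)
  qed simp
  show ?thesis
  proof (cases "a1 = 0 \<or> a2 = 0")
    case True
    then show ?thesis using assms mono by (auto simp: add.commute)
  next
    case False
    then have p1: "a1 > 0" and p2: "a2 > 0" using assms by auto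
    define A where "A = a1 + a2"
    define B where "B = b1 + b2"
    have AB: "A > 0" "B > 0" using p1 p2 assms by (auto simp: A_def B_def)
    have b: "b1 > 0" "b2 > 0" using p1 p2 assms by auto
    have e1: "a1 * ln (b1/a1) - a1 * ln (B/A) \<le> b1 * A / B - a1"
    proof -
      have "ln (b1/a1) - ln (B/A) = ln ((b1*A)/(a1*B))" using AB b p1 by (simp add: ln_div ln_mult)
      also have "\<dots> \<le> (b1*A)/(a1*B) - 1" using AB b p1 by (intro ln_le_minus_one) auto
      finally have "a1 * (ln (b1/a1) - ln (B/A)) \<le> a1 * ((b1*A)/(a1*B) - 1)" using p1 by (intro mult_left_mono) auto
      then show ?thesis using p1 AB by (simp add: algebra_simps)
    qed
    have e2: "a2 * ln (b2/a2) - a2 * ln (B/A) \<le> b2 * A / B - a2"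
    proof -
      have "ln (b2/a2) - ln (B/A) = ln ((b2*A)/(a2*B))" using AB b p2 by (simp add: ln_div ln_mult)
      also have "\<dots> \<le> (b2*A)/(a2*B) - 1" using AB b p2 by (intro ln_le_minus_one) auto
      finally have "a2 * (ln (b2/a2) - ln (B/A)) \<le> a2 * ((b2*A)/(a2*B) - 1)" using p2 by (intro mult_left_mono) auto
      then show ?thesis using p2 AB by (simp add: algebra_simps)
    qed
    have "b1 * A / B + b2 * A / B = (b1 + b2) * A / B" by (simp add: add_divide_distrib distrib_right)
    also have "\<dots> = A" using AB unfolding B_def by simp
    finally have "b1 * A / B + b2 * A / B = A" .
    then have "a1 * ln (b1/a1) + a2 * ln (b2/a2) \<le> A * ln (B/A)" using e1 e2 by (simp add: A_def algebra_simps)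
    then show ?thesis by (simp add: L_def A_def B_def)
  qed
qed

lemma G_super:
  assumes "0 \<le> x1" "0 \<le> y1" "0 \<le> x2" "0 \<le> y2"
  shows "G x1 y1 + G x2 y2 \<le> G (x1+x2) (y1+y2)"
proof -
  have "L x1 (x1+y1) + L x2 (x2+y2) \<le> L (x1+x2) ((x1+y1)+(x2+y2))" using assms by (intro logsum) auto
  moreover have "L y1 (x1+y1) + L y2 (x2+y2) \<le> L (y1+y2) ((x1+y1)+(x2+y2))" using assms by (intro logsum) auto
  ultimately show ?thesis unfolding G_def by (simp add: algebra_simps)
qed

definition separates :: "'a set set \<Rightarrow> 'a set \<Rightarrow> bool" where
  "separates F S \<longleftrightarrow> (\<forall>u\<in>S. \<forall>v\<in>S. u \<noteq> v \<longrightarrow> (\<exists>I\<in>F. (u \<in> I) \<noteq> (v \<in> I)))"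

lemma count_ind:
  assumes "finite F"
  shows "finite S \<Longrightarrow> separates F S \<Longrightarrow>
    phi (real (card S)) \<le> (\<Sum>I\<in>F. G (real (card (S \<inter> I))) (real (card (S - I))))"
  using assms
proof (induction F arbitrary: S rule: finite_induct)
  case empty
  then have "card S \<le> 1" unfolding separates_def by (auto simp: card_le_Suc0_iff_eq)
  then have "card S = 0 \<or> card S = 1" by auto
  then show ?case by (auto simp: phi_def)
next
  case (insert I F)
  define S1 where "S1 = S \<inter> I"
  define S0 where "S0 = S - I"
  have sep1: "separates F S1" unfolding separates_def
  proof (intro ballI impI)
    fix u v assume u: "u \<in> S1" and v: "v \<in> S1" and uv: "u \<noteq> v"
    then obtain J where J: "J \<in> insert I F" "(u \<in> J) \<noteq> (v \<in> J)"
      using insert.prems(2) unfolding separates_def S1_def by blast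
    then have "J \<noteq> I" using u v by (auto simp: S1_def)
    then show "\<exists>J\<in>F. (u \<in> J) \<noteq> (v \<in> J)" using J by blast
  qed
  have sep0: "separates F S0" unfolding separates_def
  proof (intro ballI impI)
    fix u v assume u: "u \<in> S0" and v: "v \<in> S0" and uv: "u \<noteq> v"
    then obtain J where J: "J \<in> insert I F" "(u \<in> J) \<noteq> (v \<in> J)"
      using insert.prems(2) unfolding separates_def S0_def by blast
    then have "J \<noteq> I" using u v by (auto simp: S0_def)
    then show "\<exists>J\<in>F. (u \<in> J) \<noteq> (v \<in> J)" using J by blast
  qed
  have fin: "finite S1" "finite S0" using insert.prems(1) by (auto simp: S1_def S0_def)
  note ih1 = insert.IH[OF fin(1) sep1] and ih0 = insert.IH[OF fin(2) sep0]
  have cS: "card S = card S1 + card S0" unfolding S1_def S0_def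
    using insert.prems(1) by (metis card_Int_Diff)
  have cJ: "card (S \<inter> J) = card (S1 \<inter> J) + card (S0 \<inter> J)" "card (S - J) = card (S1 - J) + card (S0 - J)" for J
  proof -
    have "S \<inter> J = (S1 \<inter> J) \<union> (S0 \<inter> J)" "(S1 \<inter> J) \<inter> (S0 \<inter> J) = {}" by (auto simp: S1_def S0_def)
    then show "card (S \<inter> J) = card (S1 \<inter> J) + card (S0 \<inter> J)" using fin by (simp add: card_Un_disjoint)
    have "S - J = (S1 - J) \<union> (S0 - J)" "(S1 - J) \<inter> (S0 - J) = {}" by (auto simp: S1_def S0_def)
    then show "card (S - J) = card (S1 - J) + card (S0 - J)" using fin by (simp add: card_Un_disjoint)
  qed
  have "phi (real (card S)) = phi (real (card S1)) + phi (real (card S0)) + G (card S1) (card S0)"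
    using cS phi_split by simp
  also have "\<dots> \<le> (\<Sum>J\<in>F. G (card (S1 \<inter> J)) (card (S1 - J))) + (\<Sum>J\<in>F. G (card (S0 \<inter> J)) (card (S0 - J))) + G (card S1) (card S0)"
    using ih1 ih0 by simp
  also have "\<dots> = (\<Sum>J\<in>F. G (card (S1 \<inter> J)) (card (S1 - J)) + G (card (S0 \<inter> J)) (card (S0 - J))) + G (card S1) (card S0)"
    by (simp add: sum.distrib)
  also have "\<dots> \<le> (\<Sum>J\<in>F. G (card (S \<inter> J)) (card (S - J))) + G (card S1) (card S0)"
    by (intro add_right_mono sum_mono) (simp add: cJ G_super)
  also have "\<dots> = (\<Sum>J\<in>insert I F. G (card (S \<inter> J)) (card (S - J)))"
    using insert.hyps by (simp add: S1_def S0_def)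
  finally show ?case .
qed

lemma G_bound:
  assumes "a \<le> k" "0 < k" "k < n" "0 \<le> a"
  shows "G a (n - a) \<le> k * ln (n * exp 1 / k)"
proof -
  have nk: "n / k \<ge> 1" using assms by simp
  have lnk: "ln (n * exp 1 / k) = ln (n/k) + 1" using assms by (simp add: ln_mult ln_div)
  have lnk0: "ln (n/k) \<ge> 0" using nk by simp
  show ?thesis
  proof (cases "a = 0")
    case True
    then show ?thesis using assms lnk lnk0 by (simp add: G_def L_def)
  next
    case False
    then have a0: "a > 0" using assms by auto
    have na: "n - a > 0" using assms a0 by linarith
    have t2: "L (n-a) n \<le> a"
    proof -
      have "ln (n/(n-a)) \<le> n/(n-a) - 1" using na assms by (intro ln_le_minus_one) auto
      then have "(n-a) * ln (n/(n-a)) \<le> (n-a) * (n/(n-a) - 1)" using na by (intro mult_left_mono) auto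
      also have "\<dots> = a" using na by (simp add: right_diff_distrib)
      finally show ?thesis by (simp add: L_def)
    qed
    have t1: "a * ln (n/a) \<le> a * ln (n/k) + (k - a)"
    proof -
      have "ln (k/a) \<le> k/a - 1" using a0 assms by (intro ln_le_minus_one) auto
      then have "a * ln (k/a) \<le> a * (k/a - 1)" using a0 by (intro mult_left_mono) auto
      also have "\<dots> = k - a" using a0 by (simp add: algebra_simps)
      finally have "a * ln (k/a) \<le> k - a" .
      moreover have "ln (n/a) = ln (n/k) + ln (k/a)" using a0 assms by (simp add: ln_div)
      ultimately show ?thesis by (simp add: algebra_simps)
    qed
    have "a * ln (n/k) \<le> k * ln (n/k)" using assms lnk0 by (intro mult_right_mono) auto
    have "G a (n - a) = a * ln (n/a) + L (n-a) n" by (simp add: G_def L_def)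
    also have "\<dots> \<le> k * ln (n/k) + k" using t1 t2 \<open>a * ln (n/k) \<le> k * ln (n/k)\<close> by linarith
    also have "\<dots> = k * ln (n * exp 1 / k)" using lnk by (simp add: algebra_simps)
    finally show ?thesis .
  qed
qed

theorem sep_lower_bound:
  fixes n k :: nat and F :: "nat set set"
  assumes "finite F" "\<forall>I\<in>F. I \<subseteq> {1..n} \<and> card I \<le> k" "separates F {1..n}"
    and "0 < k" "k < n"
  shows "real n / real k * log (real n * exp 1 / real k) (real n) \<le> real (card F)"
proof -
  have "phi (real n) \<le> (\<Sum>I\<in>F. G (real (card I)) (real (card ({1..n} - I))))"
    using count_ind[OF assms(1) _ assms(3)] assms(2) by (simp add: Int_absorb1)
  also have "\<dots> \<le> (\<Sum>I\<in>F. real k * ln (real n * exp 1 / real k))"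
  proof (rule sum_mono)
    fix I assume I: "I \<in> F"
    then have "card ({1..n} - I) = n - card I" "card I \<le> k" using assms(2) by (auto simp: card_Diff_subset finite_subset)
    then have "real (card ({1..n} - I)) = real n - real (card I)" using assms(5) by auto
    then show "G (real (card I)) (real (card ({1..n} - I))) \<le> real k * ln (real n * exp 1 / real k)"
      using G_bound[of "real (card I)" "real k" "real n"] \<open>card I \<le> k\<close> assms by auto
  qed
  finally have *: "real n * ln (real n) \<le> real (card F) * (real k * ln (real n * exp 1 / real k))"
    by (simp add: phi_def)
  have pos: "ln (real n * exp 1 / real k) > 0"
  proof -
    have "real n * exp 1 / real k \<ge> exp 1" using assms by (simp add: field_simps)
    then show ?thesis by (meson exp_gt_one less_le_trans ln_gt_zero zero_less_one)
  qed
  have "real n / real k * log (real n * exp 1 / real k) (real n) = real n * ln (real n) / (real k * ln (real n * exp 1 / real k))"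
    by (simp add: log_def)
  also have "\<dots> \<le> real (card F)" using * pos assms by (simp add: divide_le_eq)
  finally show ?thesis .
qed



definition rank :: "nat \<Rightarrow> (nat \<Rightarrow> nat) \<Rightarrow> nat \<Rightarrow> nat" where
  "rank n g u = card {w \<in> {1..n}. g w < g u} + 1"

lemma rank_mono:
  assumes "u \<in> {1..n}" "v \<in> {1..n}" "g u < g v"
  shows "rank n g u < rank n g v"
proof -
  have "{w \<in> {1..n}. g w < g u} \<subset> {w \<in> {1..n}. g w < g v}" using assms by auto
  then have "card {w \<in> {1..n}. g w < g u} < card {w \<in> {1..n}. g w < g v}"
    by (intro psubset_card_mono) auto
  then show ?thesis by (simp add: rank_def)
qed

lemma rank_total:
  assumes "inj_on g {1..n}"
  shows "total_ordering n (rank n g)"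
proof -
  have inj: "inj_on (rank n g) {1..n}"
  proof (rule inj_onI)
    fix u v assume uv: "u \<in> {1..n}" "v \<in> {1..n}" "rank n g u = rank n g v"
    show "u = v"
    proof (rule ccontr)
      assume "u \<noteq> v"
      then have "g u \<noteq> g v" using assms uv by (meson inj_onD)
      then have "g u < g v \<or> g v < g u" by auto
      then show False using rank_mono uv by (metis less_irrefl)
    qed
  qed
  have img: "rank n g ` {1..n} \<subseteq> {1..n}"
  proof
    fix x assume "x \<in> rank n g ` {1..n}"
    then obtain u where u: "u \<in> {1..n}" "x = rank n g u" by auto
    have "{w \<in> {1..n}. g w < g u} \<subseteq> {1..n} - {u}" by auto
    then have "card {w \<in> {1..n}. g w < g u} \<le> card ({1..n} - {u})" by (intro card_mono) auto
    also have "\<dots> = n - 1" using u by simp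
    finally have "card {w \<in> {1..n}. g w < g u} \<le> n - 1" .
    then have "card {w \<in> {1..n}. g w < g u} + 1 \<le> n" using u by (simp add: le_diff_conv2)
    then show "x \<in> {1..n}" using u by (simp add: rank_def)
  qed
  have "rank n g ` {1..n} = {1..n}" using endo_inj_surj[OF _ img inj] by simp
  then show ?thesis using inj by (simp add: total_ordering_def bij_betw_def)
qed

lemma total_inj: "total_ordering n \<sigma> \<Longrightarrow> u \<in> {1..n} \<Longrightarrow> v \<in> {1..n} \<Longrightarrow> u \<noteq> v \<Longrightarrow> \<sigma> u \<noteq> \<sigma> v"
  unfolding total_ordering_def bij_betw_def by (meson inj_onD)

lemma apply_list_Cons: "apply_list n \<sigma> D (I # Is) = apply_list n \<sigma> (intervene n \<sigma> D I) Is"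
  by (simp add: apply_list_def)

lemma apply_list_props:
  assumes "D \<subseteq> fwd n \<sigma>"
  shows "D \<union> (\<Union>I\<in>set Is. cut_edges n \<sigma> I) \<subseteq> apply_list n \<sigma> D Is
       \<and> apply_list n \<sigma> D Is \<subseteq> (D \<union> (\<Union>I\<in>set Is. cut_edges n \<sigma> I))\<^sup>+"
  using assms
proof (induction Is arbitrary: D)
  case Nil
  have "D \<subseteq> D\<^sup>+" using r_into_trancl by auto
  then show ?case by (simp add: apply_list_def)
next
  case (Cons I Is)
  define C where "C = cut_edges n \<sigma> I"
  define U where "U = (\<Union>J\<in>set Is. cut_edges n \<sigma> J)"
  let ?D = "intervene n \<sigma> D I"
  have eq: "?D = (D \<union> C)\<^sup>+" using intervene_eq[OF Cons.prems] by (simp add: C_def)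
  have f: "?D \<subseteq> fwd n \<sigma>" using intervene_fwd[OF Cons.prems] .
  have ih1: "?D \<union> U \<subseteq> apply_list n \<sigma> ?D Is" and ih2: "apply_list n \<sigma> ?D Is \<subseteq> (?D \<union> U)\<^sup>+"
    using Cons.IH[OF f] by (simp_all add: U_def)
  have W: "(\<Union>J\<in>set (I#Is). cut_edges n \<sigma> J) = C \<union> U" by (simp add: C_def U_def)
  have "D \<union> C \<subseteq> ?D" unfolding eq using r_into_trancl by auto
  then have 1: "D \<union> (C \<union> U) \<subseteq> apply_list n \<sigma> ?D Is" using ih1 by blast
  have "(?D \<union> U)\<^sup>+ = (D \<union> C \<union> U)\<^sup>+" unfolding eq by (rule trancl_trancl_Un)
  then have 2: "apply_list n \<sigma> ?D Is \<subseteq> (D \<union> (C \<union> U))\<^sup>+" using ih2 by (simp add: Un_assoc)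
  show ?case using 1 2 unfolding W apply_list_Cons by blast
qed

lemma consecutive_order:
  assumes "u \<in> {1..n}" "v \<in> {1..n}" "u \<noteq> v"
  shows "\<exists>\<sigma>. total_ordering n \<sigma> \<and> \<sigma> v = \<sigma> u + 1"
proof -
  define g where "g w = (if w = v then 2*u+1 else 2*w)" for w
  have inj: "inj_on g {1..n}" unfolding g_def by (rule inj_onI) (auto split: if_splits; presburger)
  have "{w \<in> {1..n}. g w < g v} = insert u {w \<in> {1..n}. g w < g u}"
    using assms unfolding g_def by auto
  moreover have "u \<notin> {w \<in> {1..n}. g w < g u}" by auto
  ultimately have "rank n g v = rank n g u + 1" unfolding rank_def by simp
  then show ?thesis using rank_total[OF inj] by blast
qed

lemma some_order_separates:
  assumes "family_orients_some_order n F"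
  shows "separates F {1..n}"
  unfolding separates_def
proof (intro ballI impI)
  fix u v assume uv: "u \<in> {1..n}" "v \<in> {1..n}" "u \<noteq> v"
  obtain \<sigma> where \<sigma>: "total_ordering n \<sigma>" "\<sigma> v = \<sigma> u + 1" using consecutive_order[OF uv] by blast
  obtain Is where Is: "set Is = F" "fully_oriented n (apply_list n \<sigma> {} Is)"
    using assms \<sigma>(1) unfolding family_orients_some_order_def by blast
  define R where "R = (\<Union>I\<in>set Is. cut_edges n \<sigma> I)"
  have Rf: "R \<subseteq> fwd n \<sigma>" using cut_fwd' unfolding R_def by blast
  have sub: "apply_list n \<sigma> {} Is \<subseteq> R\<^sup>+" using apply_list_props[of "{}" n \<sigma> Is] by (simp add: R_def)
  have "adj n u v" using uv by (simp add: adj_def)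
  then have "(u,v) \<in> R\<^sup>+ \<or> (v,u) \<in> R\<^sup>+" using Is(2) sub unfolding fully_oriented_def by blast
  moreover have "(v,u) \<notin> R\<^sup>+" using trancl_fwd[OF Rf] \<sigma>(2) by (auto simp: fwd_def)
  ultimately have uvR: "(u,v) \<in> R\<^sup>+" by blast
  have "(u,v) \<in> R"
  proof (rule ccontr)
    assume "(u,v) \<notin> R"
    with uvR obtain c where "(u,c) \<in> R\<^sup>+" "(c,v) \<in> R" by (meson tranclE)
    then have "\<sigma> u < \<sigma> c" "\<sigma> c < \<sigma> v" using trancl_fwd[OF Rf] Rf by (auto simp: fwd_def)
    then show False using \<sigma>(2) by simp
  qed
  then show "\<exists>I\<in>F. (u \<in> I) \<noteq> (v \<in> I)" using Is(1) by (auto simp: R_def cut_edges_def)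
qed

lemma separates_every_order:
  assumes "finite F" "separates F {1..n}"
  shows "family_orients_every_order n F"
  unfolding family_orients_every_order_def
proof (intro conjI allI impI)
  show "finite F" by fact
  fix \<sigma> Is assume \<sigma>: "total_ordering n \<sigma>" and Is: "distinct Is \<and> set Is = F"
  have sub: "(\<Union>I\<in>set Is. cut_edges n \<sigma> I) \<subseteq> apply_list n \<sigma> {} Is"
    using apply_list_props[of "{}" n \<sigma> Is] by simp
  show "fully_oriented n (apply_list n \<sigma> {} Is)" unfolding fully_oriented_def
  proof (intro allI impI)
    fix a b assume ab: "adj n a b"
    then have "a \<in> {1..n}" "b \<in> {1..n}" "a \<noteq> b" by (auto simp: adj_def)
    then obtain I where I: "I \<in> F" "(a \<in> I) \<noteq> (b \<in> I)" using assms(2) unfolding separates_def by blast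
    have "\<sigma> a \<noteq> \<sigma> b" using total_inj[OF \<sigma>] ab by (auto simp: adj_def)
    then have "(a,b) \<in> cut_edges n \<sigma> I \<or> (b,a) \<in> cut_edges n \<sigma> I"
      using ab I by (auto simp: cut_edges_def adj_def)
    then show "(a, b) \<in> apply_list n \<sigma> {} Is \<or> (b, a) \<in> apply_list n \<sigma> {} Is"
      using sub I Is by blast
  qed
qed



lemma mod_cancel_nat:
  assumes "(c + x) mod (a::nat) = (c' + x') mod a" "x mod a = x' mod a"
  shows "c mod a = c' mod a"
proof -
  have 1: "(int c + int x) mod int a = (int c' + int x') mod int a" using assms(1) by (metis of_nat_add zmod_int)
  have 2: "int x mod int a = int x' mod int a" using assms(2) by (metis zmod_int)
  have "int c mod int a = ((int c + int x) mod int a - int x mod int a) mod int a" by (simp add: mod_diff_eq)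
  also have "\<dots> = ((int c' + int x') mod int a - int x' mod int a) mod int a" using 1 2 by simp
  also have "\<dots> = int c' mod int a" by (simp add: mod_diff_eq)
  finally show ?thesis by (metis of_nat_eq_iff zmod_int)
qed

lemma digits_differ:
  "x < a^t \<Longrightarrow> x' < a^t \<Longrightarrow> x \<noteq> x' \<Longrightarrow> (a::nat) \<ge> 2 \<Longrightarrow> \<exists>j<t. x div a^j mod a \<noteq> x' div a^j mod a"
proof (induction t arbitrary: x x')
  case 0 then show ?case by simp
next
  case (Suc t)
  show ?case
  proof (cases "x mod a = x' mod a")
    case False then show ?thesis by (intro exI[of _ 0]) auto
  next
    case True
    have "x div a \<noteq> x' div a" using True Suc.prems(3) by (metis div_mod_decomp)
    moreover have "x div a < a^t" "x' div a < a^t" using Suc.prems by (auto simp: div_less_iff_less_mult mult.commute)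
    ultimately obtain j where "j < t" "x div a div a^j mod a \<noteq> x' div a div a^j mod a"
      using Suc.IH Suc.prems(4) by blast
    then show ?thesis by (intro exI[of _ "Suc j"]) (auto simp: div_mult2_eq)
  qed
qed

definition yd :: "nat \<Rightarrow> nat \<Rightarrow> nat \<Rightarrow> nat" where
  "yd a j x = (if j = 0 then x mod a else (x div a^j + x) mod a)"

definition fam :: "nat \<Rightarrow> nat \<Rightarrow> nat \<Rightarrow> nat set set" where
  "fam n a t = (\<lambda>(j,d). {u \<in> {1..n}. yd a j (u - 1) = d}) ` ({0..<t} \<times> {1..<a})"

lemma fam_card: "card (fam n a t) \<le> (a - 1) * t"
proof -
  have "card (fam n a t) \<le> card ({0..<t} \<times> {1..<a})" unfolding fam_def by (rule card_image_le) auto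
  also have "\<dots> = (a - 1) * t" by (simp add: card_cartesian_product)
  finally show ?thesis .
qed

lemma fam_sets:
  assumes "a \<ge> 2" "n \<le> a * k" "I \<in> fam n a t" "0 < k"
  shows "I \<subseteq> {1..n} \<and> card I \<le> k"
proof -
  obtain j d where I: "I = {u \<in> {1..n}. yd a j (u - 1) = d}" using assms(3) unfolding fam_def by auto
  define h where "h u = (u - 1) div a" for u
  have inj: "inj_on h I"
  proof (rule inj_onI)
    fix u v assume u: "u \<in> I" and v: "v \<in> I" and huv: "h u = h v"
    define x where "x = u - 1"
    define x' where "x' = v - 1"
    have hx: "x div a = x' div a" using huv by (simp add: h_def x_def x'_def)
    have ya: "yd a j x = yd a j x'" using u v I by (simp add: x_def x'_def)
    have "x mod a = x' mod a"
    proof (cases "j = 0")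
      case True then show ?thesis using ya by (simp add: yd_def)
    next
      case False
      then obtain i where i: "j = Suc i" by (cases j) auto
      have "x div a^j = x' div a^j" using hx i by (simp add: div_mult2_eq)
      then have "(x + x' div a^j) mod a = (x' + x' div a^j) mod a" using ya False by (simp add: yd_def add.commute)
      then show ?thesis using mod_cancel_nat[of x "x' div a^j" a x' "x' div a^j"] by simp
    qed
    then have "x = x'" using hx by (metis div_mod_decomp)
    then show "u = v" using u v I by (auto simp: x_def x'_def)
  qed
  have "h ` I \<subseteq> {0..(n - 1) div a}" using I by (auto simp: h_def intro!: div_le_mono diff_le_mono)
  then have "card (h ` I) \<le> Suc ((n - 1) div a)" using card_mono[of "{0..(n - 1) div a}"] by fastforce
  moreover have "(n - 1) div a < k"
  proof (cases "n = 0")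
    case True then show ?thesis using assms by (cases k) auto
  next
    case False
    then have "n - 1 < a * k" using assms by linarith
    then show ?thesis using assms by (simp add: div_less_iff_less_mult mult.commute)
  qed
  ultimately have "card I \<le> k" using card_image[OF inj] by simp
  then show ?thesis using I by auto
qed

lemma fam_separates:
  assumes "a \<ge> 2" "n \<le> a ^ t"
  shows "separates (fam n a t) {1..n}"
  unfolding separates_def
proof (intro ballI impI)
  fix u v :: nat assume u: "u \<in> {1..n}" and v: "v \<in> {1..n}" and uv: "u \<noteq> v"
  define x where "x = u - 1"
  define x' where "x' = v - 1"
  have xx: "x < a^t" "x' < a^t" "x \<noteq> x'" using u v uv assms by (auto simp: x_def x'_def)
  obtain j where j: "j < t" "x div a^j mod a \<noteq> x' div a^j mod a" using digits_differ[OF xx assms(1)] by blast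
  have "\<exists>j<t. yd a j x \<noteq> yd a j x'"
  proof (cases "x mod a = x' mod a")
    case False
    have "yd a 0 x \<noteq> yd a 0 x'" using False unfolding yd_def by simp
    moreover have "0 < t" using j by simp
    ultimately show ?thesis by blast
  next
    case True
    have j0: "j \<noteq> 0"
    proof
      assume "j = 0" then show False using j True by simp
    qed
    have "yd a j x \<noteq> yd a j x'"
    proof
      assume "yd a j x = yd a j x'"
      then have "(x div a^j + x) mod a = (x' div a^j + x') mod a" using j0 unfolding yd_def by simp
      then have "x div a^j mod a = x' div a^j mod a" using mod_cancel_nat True by blast
      then show False using j by simp
    qed
    then show ?thesis using j by blast
  qed
  then obtain j where j: "j < t" "yd a j x \<noteq> yd a j x'" by blast
  have lt: "yd a j y < a" for y using assms(1) unfolding yd_def by simp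
  define Sd where "Sd d = {w \<in> {1..n}. yd a j (w - 1) = d}" for d
  have inF: "Sd d \<in> fam n a t" if "d \<in> {1..<a}" for d
    unfolding fam_def Sd_def using that j(1) by (intro image_eqI[where x="(j,d)"]) auto
  have mem: "w \<in> Sd d \<longleftrightarrow> w \<in> {1..n} \<and> yd a j (w - 1) = d" for w d unfolding Sd_def by simp
  show "\<exists>I\<in>fam n a t. (u \<in> I) \<noteq> (v \<in> I)"
  proof (cases "yd a j x = 0")
    case True
    define d where "d = yd a j x'"
    have d1: "d \<in> {1..<a}" using True j lt[of x'] unfolding d_def by auto
    have "v \<in> Sd d" using v mem unfolding d_def x'_def by simp
    moreover have "u \<notin> Sd d" using True d1 mem unfolding x_def by auto
    ultimately show ?thesis using inF[OF d1] by blast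
  next
    case False
    define d where "d = yd a j x"
    have d1: "d \<in> {1..<a}" using False lt[of x] unfolding d_def by auto
    have "u \<in> Sd d" using u mem unfolding d_def x_def by simp
    moreover have "v \<notin> Sd d" using j mem unfolding d_def x_def x'_def by auto
    ultimately show ?thesis using inF[OF d1] by blast
  qed
qed

lemma partC:
  fixes n k :: nat
  assumes "0 < n" "0 < k" "real k < real n / 2"
  shows "\<exists>\<I>. (\<forall>I \<in> \<I>. I \<subseteq> {1..n} \<and> card I \<le> k) \<and> family_orients_every_order n \<I> \<and>
            card \<I> \<le> (nat \<lceil>real n / real k\<rceil> - 1) *
                      nat \<lceil>log (real (nat \<lceil>real n / real k\<rceil>)) (real n)\<rceil>"
proof -
  define a where "a = nat \<lceil>real n / real k\<rceil>"
  define t where "t = nat \<lceil>log (real a) (real n)\<rceil>"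
  have c0: "real n / real k \<le> of_int \<lceil>real n / real k\<rceil>" by (rule le_of_int_ceiling)
  have ra: "real a = of_int \<lceil>real n / real k\<rceil>" unfolding a_def using c0 assms by simp
  have a2: "a \<ge> 2"
  proof -
    have "real n / real k > 2" using assms by (simp add: field_simps)
    then have "real a > 2" using ra c0 by linarith
    then show ?thesis by simp
  qed
  have nak: "n \<le> a * k"
  proof -
    have "real n \<le> of_int \<lceil>real n / real k\<rceil> * real k" by (metis c0 pos_divide_le_eq of_nat_0_less_iff assms(2))
    then have "real n \<le> real a * real k" using ra by simp
    then show ?thesis by (simp flip: of_nat_mult)
  qed
  have nat: "n \<le> a ^ t"
  proof -
    have "log (real a) (real n) \<le> real t" unfolding t_def by linarith
    have "real n \<le> real a ^ t"
    proof (rule ccontr)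
      assume "\<not> real n \<le> real a ^ t"
      then have "real t < log (real a) (real n)" using a2 by (intro less_log_of_power) auto
      then show False using \<open>log (real a) (real n) \<le> real t\<close> by linarith
    qed
    then show ?thesis by (simp flip: of_nat_power)
  qed
  have s1: "\<forall>I\<in>fam n a t. I \<subseteq> {1..n} \<and> card I \<le> k" using fam_sets[OF a2 nak _ assms(2)] by blast
  have fin: "finite (fam n a t)" unfolding fam_def by simp
  have s2: "family_orients_every_order n (fam n a t)"
    using separates_every_order[OF fin fam_separates[OF a2 nat]] .
  have s3: "card (fam n a t) \<le> (a - 1) * t" by (rule fam_card)
  have "\<exists>\<I>. (\<forall>I \<in> \<I>. I \<subseteq> {1..n} \<and> card I \<le> k) \<and> family_orients_every_order n \<I> \<and> card \<I> \<le> (a - 1) * t"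
    using s1 s2 s3 by blast
  then show ?thesis by (simp add: a_def t_def)
qed



definition key :: "nat set list \<Rightarrow> nat \<Rightarrow> nat" where
  "key Is u = foldl (\<lambda>acc I. 2 * acc + (if u \<in> I then 1 else 0)) 0 Is"

definition cons :: "nat \<Rightarrow> nat set list \<Rightarrow> (nat \<Rightarrow> nat) \<Rightarrow> bool" where
  "cons n Is \<sigma> \<longleftrightarrow> (\<forall>u\<in>{1..n}. \<forall>v\<in>{1..n}. key Is u < key Is v \<longrightarrow> \<sigma> u < \<sigma> v)"

definition Pj :: "algorithm \<Rightarrow> nat \<Rightarrow> nat \<Rightarrow> (nat \<Rightarrow> nat) \<Rightarrow> bool" where
  "Pj alg n j \<sigma> \<longleftrightarrow> (\<forall>\<sigma>'. cons n (snd (adaptive_run alg n \<sigma> j)) \<sigma>' \<longrightarrow>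
       adaptive_run alg n \<sigma>' j = adaptive_run alg n \<sigma> j)"

lemma key_Nil[simp]: "key [] u = 0" by (simp add: key_def)

lemma key_snoc: "key (Is @ [I]) u = 2 * key Is u + (if u \<in> I then 1 else 0)"
  by (simp add: key_def)

lemma key_append: "key (A @ B) u = key A u * 2 ^ length B + key B u"
proof (induction B rule: rev_induct)
  case Nil then show ?case by simp
next
  case (snoc x xs)
  have "key (A @ xs @ [x]) u = 2 * key (A @ xs) u + (if u \<in> x then 1 else 0)"
    using key_snoc[of "A @ xs"] by simp
  then show ?case using snoc by (simp add: key_snoc algebra_simps)
qed

lemma key_bound: "key B u < 2 ^ length B"
proof (induction B rule: rev_induct)
  case Nil then show ?case by simp
next
  case (snoc x xs) then show ?case by (simp add: key_snoc)
qed

lemma key_div: "key (A @ B) u div 2 ^ length B = key A u"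
  using key_append[of A B u] key_bound[of B u] by simp

lemma two_eq: "(2*a + (if P then 1 else 0) = 2*c + (if Q then 1 else (0::nat))) = (a = c \<and> P = Q)"
  by (cases P; cases Q; simp; presburger)

lemma key_eq_iff: "key Is u = key Is v \<longleftrightarrow> (\<forall>I\<in>set Is. (u \<in> I) = (v \<in> I))"
proof (induction Is rule: rev_induct)
  case Nil then show ?case by simp
next
  case (snoc x xs)
  show ?case unfolding key_snoc two_eq using snoc by auto
qed

lemma cons_prefix:
  assumes "cons n (A @ B) \<sigma>" shows "cons n A \<sigma>"
  unfolding cons_def
proof (intro ballI impI)
  fix u v assume uv: "u \<in> {1..n}" "v \<in> {1..n}" "key A u < key A v"
  have "key (A @ B) u div 2 ^ length B < key (A @ B) v div 2 ^ length B" using uv(3) by (simp add: key_div)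
  then have "key (A @ B) u < key (A @ B) v" by (meson div_le_mono not_le)
  then show "\<sigma> u < \<sigma> v" using assms uv unfolding cons_def by blast
qed

lemma cons_exists: "\<exists>\<sigma>. total_ordering n \<sigma> \<and> cons n Is \<sigma>"
proof -
  define g where "g u = key Is u * (n + 1) + u" for u
  have inj: "inj_on g {1..n}"
  proof (rule inj_onI)
    fix u v assume u: "u \<in> {1..n}" and v: "v \<in> {1..n}" and e: "g u = g v"
    have "g u mod (n+1) = u mod (n+1)" "g v mod (n+1) = v mod (n+1)" unfolding g_def by (rule mod_mult_self3)+
    moreover have "u mod (n+1) = u" "v mod (n+1) = v" using u v by auto
    ultimately have "g u mod (n+1) = u" "g v mod (n+1) = v" by simp_all
    then show "u = v" using e by simp
  qed
  have "cons n Is (rank n g)" unfolding cons_def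
  proof (intro ballI impI)
    fix u v assume u: "u \<in> {1..n}" and v: "v \<in> {1..n}" and lt: "key Is u < key Is v"
    have "g u < (key Is u + 1) * (n + 1)" using u by (simp add: g_def)
    also have "\<dots> \<le> key Is v * (n + 1)" using lt by (intro mult_le_mono1) simp
    also have "\<dots> \<le> g v" by (simp add: g_def)
    finally show "rank n g u < rank n g v" using rank_mono u v by blast
  qed
  then show ?thesis using rank_total[OF inj] by blast
qed

lemma run_Suc: "adaptive_run alg n \<sigma> (Suc j) =
  (case alg (fst (adaptive_run alg n \<sigma> j)) of None \<Rightarrow> adaptive_run alg n \<sigma> j
   | Some I \<Rightarrow> (intervene n \<sigma> (fst (adaptive_run alg n \<sigma> j)) I, snd (adaptive_run alg n \<sigma> j) @ [I]))"
  by (simp split: prod.split option.split)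

declare adaptive_run.simps(2)[simp del]

lemma run_ext: "\<exists>B. snd (adaptive_run alg n \<sigma> (Suc j)) = snd (adaptive_run alg n \<sigma> j) @ B"
  by (cases "alg (fst (adaptive_run alg n \<sigma> j))") (auto simp: run_Suc)

lemma run_fwd: "fst (adaptive_run alg n \<sigma> j) \<subseteq> fwd n \<sigma>"
proof (induction j)
  case 0 then show ?case by simp
next
  case (Suc j)
  show ?case
  proof (cases "alg (fst (adaptive_run alg n \<sigma> j))")
    case None then show ?thesis using Suc by (simp add: run_Suc)
  next
    case (Some I) then show ?thesis using Suc intervene_fwd[OF Suc] by (simp add: run_Suc)
  qed
qed

lemma stop_const: "stops_at alg n \<sigma> m \<Longrightarrow> adaptive_run alg n \<sigma> (m + d) = adaptive_run alg n \<sigma> m"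
proof (induction d)
  case 0 then show ?case by simp
next
  case (Suc d)
  then show ?case using Suc by (simp add: run_Suc[of alg n \<sigma> "m + d"] stops_at_def)
qed

lemma cut_eq:
  assumes "cons n (Is @ [I]) \<sigma>" "cons n (Is @ [I]) \<sigma>'"
  shows "cut_edges n \<sigma> I = cut_edges n \<sigma>' I"
proof -
  have "(\<sigma> u < \<sigma> v) = (\<sigma>' u < \<sigma>' v)" if "adj n u v" "(u \<in> I) = (v \<notin> I)" for u v
  proof -
    have uv: "u \<in> {1..n}" "v \<in> {1..n}" using that by (auto simp: adj_def)
    have "key (Is @ [I]) u \<noteq> key (Is @ [I]) v" using that(2) unfolding key_snoc two_eq by auto
    then have "key (Is @ [I]) u < key (Is @ [I]) v \<or> key (Is @ [I]) v < key (Is @ [I]) u" by auto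
    then show ?thesis using assms uv unfolding cons_def by (meson less_asym)
  qed
  then show ?thesis unfolding cut_edges_def by auto
qed

lemma step_lemma:
  assumes "Pj alg n j \<sigma>"
  shows "\<exists>\<sigma>'. total_ordering n \<sigma>' \<and> cons n (snd (adaptive_run alg n \<sigma> j)) \<sigma>' \<and> Pj alg n (Suc j) \<sigma>'"
proof -
  obtain D Is where R: "adaptive_run alg n \<sigma> j = (D, Is)" by (cases "adaptive_run alg n \<sigma> j")
  have same: "adaptive_run alg n \<sigma>' j = (D, Is)" if "cons n Is \<sigma>'" for \<sigma>'
    using assms that R unfolding Pj_def by auto
  show ?thesis
  proof (cases "alg D")
    case None
    obtain \<sigma>' where \<sigma>': "total_ordering n \<sigma>'" "cons n Is \<sigma>'" using cons_exists by blast
    have r: "adaptive_run alg n \<sigma>'' (Suc j) = (D, Is)" if "cons n Is \<sigma>''" for \<sigma>''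
      using same[OF that] None by (simp add: run_Suc)
    have "Pj alg n (Suc j) \<sigma>'" unfolding Pj_def using r \<sigma>'(2) by simp
    then show ?thesis using \<sigma>' R by auto
  next
    case (Some I)
    obtain \<sigma>' where \<sigma>': "total_ordering n \<sigma>'" "cons n (Is @ [I]) \<sigma>'" using cons_exists by blast
    have r: "adaptive_run alg n \<sigma>'' (Suc j) = (intervene n \<sigma>'' D I, Is @ [I])" if "cons n (Is @ [I]) \<sigma>''" for \<sigma>''
      using same[OF cons_prefix[OF that]] Some by (simp add: run_Suc)
    have "Pj alg n (Suc j) \<sigma>'" unfolding Pj_def
    proof (intro allI impI)
      fix \<sigma>'' assume c: "cons n (snd (adaptive_run alg n \<sigma>' (Suc j))) \<sigma>''"
      then have c': "cons n (Is @ [I]) \<sigma>''" using r[OF \<sigma>'(2)] by simp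
      show "adaptive_run alg n \<sigma>'' (Suc j) = adaptive_run alg n \<sigma>' (Suc j)"
        using r[OF c'] r[OF \<sigma>'(2)] cut_eq[OF c' \<sigma>'(2)] unfolding intervene_def by simp
    qed
    then show ?thesis using \<sigma>' R cons_prefix by auto
  qed
qed

fun sq :: "algorithm \<Rightarrow> nat \<Rightarrow> nat \<Rightarrow> nat \<Rightarrow> nat" where
  "sq alg n 0 = id"
| "sq alg n (Suc j) = (SOME \<sigma>'. total_ordering n \<sigma>' \<and> cons n (snd (adaptive_run alg n (sq alg n j) j)) \<sigma>'
                          \<and> Pj alg n (Suc j) \<sigma>')"

lemma sq_props: "total_ordering n (sq alg n j) \<and> Pj alg n j (sq alg n j)"
proof (induction j)
  case 0
  then show ?case by (simp add: total_ordering_def Pj_def bij_betw_def inj_on_def adaptive_run.simps(1))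
next
  case (Suc j)
  from step_lemma[of alg n j "sq alg n j"] Suc have "\<exists>\<sigma>'. total_ordering n \<sigma>' \<and> cons n (snd (adaptive_run alg n (sq alg n j) j)) \<sigma>' \<and> Pj alg n (Suc j) \<sigma>'"
    by blast
  from someI_ex[OF this] show ?case by simp
qed

lemma sq_cons: "cons n (snd (adaptive_run alg n (sq alg n j) j)) (sq alg n (Suc j))"
proof -
  from step_lemma[of alg n j "sq alg n j"] sq_props[of n alg j] have "\<exists>\<sigma>'. total_ordering n \<sigma>' \<and> cons n (snd (adaptive_run alg n (sq alg n j) j)) \<sigma>' \<and> Pj alg n (Suc j) \<sigma>'"
    by blast
  from someI_ex[OF this] show ?thesis by simp
qed

definition K :: "algorithm \<Rightarrow> nat \<Rightarrow> nat \<Rightarrow> nat set list" where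
  "K alg n j = snd (adaptive_run alg n (sq alg n j) j)"

lemma K_Suc: "\<exists>B. K alg n (Suc j) = K alg n j @ B"
proof -
  have "adaptive_run alg n (sq alg n (Suc j)) j = adaptive_run alg n (sq alg n j) j"
    using sq_props[of n alg j] sq_cons[of n alg j] unfolding Pj_def by blast
  then show ?thesis using run_ext[of alg n "sq alg n (Suc j)" j] unfolding K_def by simp
qed

lemma K_mono: "j \<le> j' \<Longrightarrow> \<exists>B. K alg n j' = K alg n j @ B"
proof (induction j' rule: dec_induct)
  case base then show ?case by (intro exI[of _ "[]"]) simp
next
  case (step i)
  then show ?case using K_Suc[of alg n i] by (metis append.assoc)
qed

definition cnt :: "algorithm \<Rightarrow> nat \<Rightarrow> nat \<Rightarrow> nat" where
  "cnt alg n j = card (key (K alg n j) ` {1..n})"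

lemma img_div: "key A ` S = (\<lambda>z. z div 2 ^ length B) ` (key (A @ B) ` S)"
  by (auto simp: image_image key_div)

lemma cnt_mono: "j \<le> j' \<Longrightarrow> cnt alg n j \<le> cnt alg n j'"
proof -
  assume "j \<le> j'"
  then obtain B where B: "K alg n j' = K alg n j @ B" using K_mono by blast
  show ?thesis unfolding cnt_def B img_div[of "K alg n j" "{1..n}" B] by (rule card_image_le) simp
qed

lemma cnt_bound: "cnt alg n j \<le> n"
  unfolding cnt_def using card_image_le[of "{1..n}" "key (K alg n j)"] by simp

lemma eventually_const:
  fixes f :: "nat \<Rightarrow> nat"
  assumes "\<And>j j'. j \<le> j' \<Longrightarrow> f j \<le> f j'" "\<And>j. f j \<le> N"
  shows "\<exists>J. \<forall>j\<ge>J. f j = f J"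
proof -
  have fin: "finite (range f)" using assms(2) by (meson finite_atMost finite_subset image_subsetI atMost_iff)
  have "Max (range f) \<in> range f" using fin by (intro Max_in) auto
  then obtain J where J: "f J = Max (range f)" by auto
  have "\<forall>j\<ge>J. f j = f J"
  proof (intro allI impI)
    fix j assume "J \<le> j"
    then have "f J \<le> f j" by (rule assms(1))
    moreover have "f j \<le> f J" using J fin by simp
    ultimately show "f j = f J" by simp
  qed
  then show ?thesis by blast
qed

lemma stable_eq:
  assumes stab: "cnt alg n j = cnt alg n J" and jJ: "J \<le> j"
    and u: "u \<in> {1..n}" and v: "v \<in> {1..n}" and e: "key (K alg n J) u = key (K alg n J) v"
  shows "key (K alg n j) u = key (K alg n j) v"
proof -
  obtain B where B: "K alg n j = K alg n J @ B" using K_mono[OF jJ] by blast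
  define h where "h z = z div 2 ^ length B" for z :: nat
  have "card (h ` key (K alg n j) ` {1..n}) = card (key (K alg n j) ` {1..n})"
    using stab unfolding cnt_def h_def B img_div[of "K alg n J" "{1..n}" B] by simp
  then have inj: "inj_on h (key (K alg n j) ` {1..n})" by (intro eq_card_imp_inj_on) auto
  have "h (key (K alg n j) u) = h (key (K alg n j) v)" using e unfolding h_def B key_div by simp
  then show ?thesis using inj u v by (meson imageI inj_onD)
qed

lemma stable_cons:
  assumes stab: "cnt alg n j = cnt alg n J" and jJ: "J \<le> j" and c: "cons n (K alg n J) \<sigma>"
  shows "cons n (K alg n j) \<sigma>"
  unfolding cons_def
proof (intro ballI impI)
  fix u v assume u: "u \<in> {1..n}" and v: "v \<in> {1..n}" and lt: "key (K alg n j) u < key (K alg n j) v"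
  obtain B where B: "K alg n j = K alg n J @ B" using K_mono[OF jJ] by blast
  have "key (K alg n J) u \<le> key (K alg n J) v"
    using lt unfolding B by (metis key_div div_le_mono less_imp_le)
  moreover have "key (K alg n J) u \<noteq> key (K alg n J) v"
    using stable_eq[OF stab jJ u v] lt by auto
  ultimately show "\<sigma> u < \<sigma> v" using c u v unfolding cons_def by auto
qed

lemma partA_sep:
  assumes "alg_fully_orients alg n k"
  shows "\<exists>\<sigma> m. total_ordering n \<sigma> \<and> stops_at alg n \<sigma> m \<and> separates (set (snd (adaptive_run alg n \<sigma> m))) {1..n}
     \<and> (\<forall>I \<in> set (snd (adaptive_run alg n \<sigma> m)). I \<subseteq> {1..n} \<and> card I \<le> k)"
proof -
  have ec: "\<exists>J. \<forall>j\<ge>J. cnt alg n j = cnt alg n J"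
    by (rule eventually_const[of "cnt alg n" n]) (rule cnt_mono, assumption, rule cnt_bound)
  then obtain J where J: "\<forall>j\<ge>J. cnt alg n j = cnt alg n J" by blast
  define s where "s = sq alg n (Suc J)"
  have st: "total_ordering n s" using sq_props[of n alg "Suc J"] unfolding s_def by blast
  have cJ: "cons n (K alg n J) s" using sq_cons[of n alg J] unfolding s_def K_def .
  have runs: "adaptive_run alg n \<sigma>'' j = adaptive_run alg n (sq alg n j) j"
    if "cons n (K alg n j) \<sigma>''" for j \<sigma>''
  proof -
    have "Pj alg n j (sq alg n j)" using sq_props[of n alg j] by blast
    then show ?thesis using that unfolding Pj_def K_def by blast
  qed
  have cs: "cons n (K alg n j) s" if "j \<ge> J" for j
  proof -
    have "cnt alg n j = cnt alg n J" using J that by blast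
    then show ?thesis using stable_cons that cJ by blast
  qed
  obtain m0 where m0: "stops_at alg n s m0" "fully_oriented n (fst (adaptive_run alg n s m0))"
    "\<forall>I \<in> set (snd (adaptive_run alg n s m0)). I \<subseteq> {1..n} \<and> card I \<le> k"
    using assms st unfolding alg_fully_orients_def by blast
  define M where "M = m0 + J"
  have MJ: "M \<ge> J" by (simp add: M_def)
  have RM: "adaptive_run alg n s M = adaptive_run alg n s m0" unfolding M_def by (rule stop_const[OF m0(1)])
  have csM: "cons n (K alg n M) s" using cs[OF MJ] .
  have RsM: "adaptive_run alg n s M = adaptive_run alg n (sq alg n M) M" using runs[OF csM] .
  have KM: "K alg n M = snd (adaptive_run alg n s m0)"
    unfolding K_def using RsM RM by simp
  have sep: "separates (set (K alg n M)) {1..n}"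
    unfolding separates_def
  proof (intro ballI impI)
    fix u v assume u: "u \<in> {1..n}" and v: "v \<in> {1..n}" and uv: "u \<noteq> v"
    show "\<exists>I\<in>set (K alg n M). (u \<in> I) \<noteq> (v \<in> I)"
    proof (rule ccontr)
      assume "\<not> ?thesis"
      then have "\<forall>I\<in>set (K alg n M). (u \<in> I) = (v \<in> I)" by blast
      then have e: "key (K alg n M) u = key (K alg n M) v" using key_eq_iff by blast
      define \<tau> where "\<tau> w = (if w = u then v else if w = v then u else w)" for w
      define s' where "s' w = s (\<tau> w)" for w
      have kt: "key (K alg n M) (\<tau> w) = key (K alg n M) w" for w using e unfolding \<tau>_def by simp
      have tS: "\<tau> w \<in> {1..n}" if "w \<in> {1..n}" for w using that u v unfolding \<tau>_def by simp
      have "cons n (K alg n M) s'" unfolding cons_def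
      proof (intro ballI impI)
        fix w x assume w: "w \<in> {1..n}" and x: "x \<in> {1..n}" and lt: "key (K alg n M) w < key (K alg n M) x"
        have "key (K alg n M) (\<tau> w) < key (K alg n M) (\<tau> x)" using lt kt by simp
        then have "s (\<tau> w) < s (\<tau> x)" using csM tS[OF w] tS[OF x] unfolding cons_def by blast
        then show "s' w < s' x" unfolding s'_def .
      qed
      then have "adaptive_run alg n s' M = adaptive_run alg n (sq alg n M) M" by (rule runs)
      then have "adaptive_run alg n s' M = adaptive_run alg n s m0" using RsM RM by simp
      then have D: "fst (adaptive_run alg n s m0) \<subseteq> fwd n s'" using run_fwd[of alg n s' M] by simp
      have D2: "fst (adaptive_run alg n s m0) \<subseteq> fwd n s" using run_fwd by blast
      have "adj n u v" using u v uv by (simp add: adj_def)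
      then have "(u,v) \<in> fst (adaptive_run alg n s m0) \<or> (v,u) \<in> fst (adaptive_run alg n s m0)"
        using m0(2) unfolding fully_oriented_def by blast
      moreover have sw: "s' u = s v" "s' v = s u" using uv unfolding s'_def \<tau>_def by auto
      ultimately show False
      proof (elim disjE)
        assume h: "(u,v) \<in> fst (adaptive_run alg n s m0)"
        have "s' u < s' v" using D h unfolding fwd_def by blast
        moreover have "s u < s v" using D2 h unfolding fwd_def by blast
        ultimately show False using sw by simp
      next
        assume h: "(v,u) \<in> fst (adaptive_run alg n s m0)"
        have "s' v < s' u" using D h unfolding fwd_def by blast
        moreover have "s v < s u" using D2 h unfolding fwd_def by blast
        ultimately show False using sw by simp
      qed
    qed
  qed
  have "total_ordering n s \<and> stops_at alg n s m0 \<and> separates (set (snd (adaptive_run alg n s m0))) {1..n}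
     \<and> (\<forall>I \<in> set (snd (adaptive_run alg n s m0)). I \<subseteq> {1..n} \<and> card I \<le> k)"
    using st m0(1) m0(3) sep unfolding KM by blast
  then show ?thesis by blast
qed



theorem theorem3:
  fixes n k :: nat
  assumes "0 < n" and "0 < k" and "real k < real n / 2"
  shows "(\<forall>alg. alg_fully_orients alg n k \<longrightarrow>
            (\<exists>\<sigma>. total_ordering n \<sigma> \<and>
               (\<exists>m. stops_at alg n \<sigma> m \<and>
                  real n / real k * log (real n * exp 1 / real k) (real n)
                    \<le> real (length (snd (adaptive_run alg n \<sigma> m))))))
       \<and> (\<forall>\<I>. (\<forall>I \<in> \<I>. I \<subseteq> {1..n} \<and> card I \<le> k) \<and> family_orients_some_order n \<I> \<longrightarrow>
            real n / real k * log (real n * exp 1 / real k) (real n) \<le> real (card \<I>))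
       \<and> (\<exists>\<I>. (\<forall>I \<in> \<I>. I \<subseteq> {1..n} \<and> card I \<le> k) \<and> family_orients_every_order n \<I> \<and>
            card \<I> \<le> (nat \<lceil>real n / real k\<rceil> - 1) *
                      nat \<lceil>log (real (nat \<lceil>real n / real k\<rceil>)) (real n)\<rceil>)"
proof (intro conjI allI impI)
  have kn: "k < n" using assms(3) by linarith
  show "\<exists>\<I>. (\<forall>I \<in> \<I>. I \<subseteq> {1..n} \<and> card I \<le> k) \<and> family_orients_every_order n \<I> \<and>
            card \<I> \<le> (nat \<lceil>real n / real k\<rceil> - 1) *
                      nat \<lceil>log (real (nat \<lceil>real n / real k\<rceil>)) (real n)\<rceil>"
    using partC[OF assms] .
  fix alg assume a: "alg_fully_orients alg n k"
  obtain \<sigma> m where sm: "total_ordering n \<sigma>" "stops_at alg n \<sigma> m"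
    "separates (set (snd (adaptive_run alg n \<sigma> m))) {1..n}"
    "\<forall>I \<in> set (snd (adaptive_run alg n \<sigma> m)). I \<subseteq> {1..n} \<and> card I \<le> k"
    using partA_sep[OF a] by blast
  have "real n / real k * log (real n * exp 1 / real k) (real n) \<le> real (card (set (snd (adaptive_run alg n \<sigma> m))))"
    by (rule sep_lower_bound[OF _ sm(4) sm(3) assms(2) kn]) simp
  also have "\<dots> \<le> real (length (snd (adaptive_run alg n \<sigma> m)))" by (simp add: card_length)
  finally show "\<exists>\<sigma>. total_ordering n \<sigma> \<and>
               (\<exists>m. stops_at alg n \<sigma> m \<and>
                  real n / real k * log (real n * exp 1 / real k) (real n)
                    \<le> real (length (snd (adaptive_run alg n \<sigma> m))))" using sm by blast
next
  fix \<I> :: "nat set set"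
  assume h: "(\<forall>I \<in> \<I>. I \<subseteq> {1..n} \<and> card I \<le> k) \<and> family_orients_some_order n \<I>"
  have kn: "k < n" using assms(3) by linarith
  have tid: "total_ordering n id" by (simp add: total_ordering_def)
  obtain Is where "set Is = \<I>" using h tid unfolding family_orients_some_order_def by blast
  then have fin: "finite \<I>" by auto
  show "real n / real k * log (real n * exp 1 / real k) (real n) \<le> real (card \<I>)"
    using sep_lower_bound[OF fin _ some_order_separates assms(2) kn] h by blast
qed


end
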